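(* Let $\mathsf{K}$ be a free simplicial $\mathbb{Z}_2$-complex with $\operatorname{ind}(\mathsf{K})=n-1$, and let $\lambda_1,\ldots,\lambda_n$ be $n$ compatible Fan labelings of $\mathsf{K}$ with labels in $\{\pm1,\ldots,\pm n\}$, such that moreover $\lambda_i(u)+\lambda_{i'}(u)\neq0$ for every vertex $u$ and all $i,i'\in[n]$. Then for every $(\alpha_1,\ldots,\alpha_n)\in\{-1,+1\}^n$, there exist a simplex $\sigma$ of $\mathsf{K}$ and a permutation $\pi$ of $[n]$ such that for each $j\in[n]$, the integer $\alpha_j\cdot j$ is a value taken by $\lambda_{\pi(j)}$ on some vertex of $\sigma$.
   Context: A free simplicial $\mathbb{Z}_2$-complex is a simplicial complex with a free simplicial $\mathbb{Z}_2$-action. A Fan labeling is a labeling of its vertices by non-zero integers such that (i) no two adjacent vertices have labels summing to zero, and (ii) the two vertices of any orbit have labels summing to zero. Fan labelings $\lambda_1,\ldots,\lambda_m$ are compatible if $\lambda_i(u)+\lambda_{i'}(u')\neq0$ for any two adjacent (distinct) vertices $u,u'$ and any $i,i'$. The $\mathbb{Z}_2$-index $\operatorname{ind}(\mathsf{K})$ is the minimal $d$ such that there is a continuous map from $\mathsf{K}$ to $\mathcal{S}^d$ commuting with the $\mathbb{Z}_2$-actions (antipodal map on $\mathcal{S}^d$). *)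

theory Defs
  imports "HOL-Analysis.Analysis"
begin

definition simplicial_complex :: "'a set set \<Rightarrow> bool" where
  "simplicial_complex K \<longleftrightarrow> finite K \<and>
     (\<forall>\<sigma>\<in>K. finite \<sigma> \<and> \<sigma> \<noteq> {} \<and> (\<forall>\<tau>. \<tau> \<subseteq> \<sigma> \<and> \<tau> \<noteq> {} \<longrightarrow> \<tau> \<in> K))"

definition vertices :: "'a set set \<Rightarrow> 'a set" where
  "vertices K = \<Union>K"

definition adjacent :: "'a set set \<Rightarrow> 'a \<Rightarrow> 'a \<Rightarrow> bool" where
  "adjacent K u u' \<longleftrightarrow> u \<noteq> u' \<and> {u, u'} \<in> K"

text \<open>A free simplicial Z2-complex: the involution \<nu> on the vertices is a simplicial
  map, has no fixed vertex, and fixes no simplex (equivalently, the induced action on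
  the geometric realization is free).\<close>
definition free_Z2_complex :: "'a set set \<Rightarrow> ('a \<Rightarrow> 'a) \<Rightarrow> bool" where
  "free_Z2_complex K \<nu> \<longleftrightarrow> simplicial_complex K \<and>
     (\<forall>v\<in>vertices K. \<nu> v \<in> vertices K \<and> \<nu> (\<nu> v) = v \<and> \<nu> v \<noteq> v) \<and>
     (\<forall>\<sigma>\<in>K. \<nu> ` \<sigma> \<in> K \<and> \<nu> ` \<sigma> \<noteq> \<sigma>)"

text \<open>Geometric realization: points are barycentric coordinate functions supported
  on a simplex; topology is the (product) topology of functions into the reals.\<close>
definition geom :: "'a set set \<Rightarrow> ('a \<Rightarrow> real) set" where
  "geom K = {x. (\<forall>v. 0 \<le> x v) \<and> (\<exists>\<sigma>\<in>K. (\<forall>v. v \<notin> \<sigma> \<longrightarrow> x v = 0) \<and> sum x \<sigma> = 1)}"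

definition sphere_d :: "nat \<Rightarrow> (nat \<Rightarrow> real) set" where
  "sphere_d d = {y. (\<forall>i>d. y i = 0) \<and> (\<Sum>i\<le>d. (y i)\<^sup>2) = 1}"

definition Z2_map_to_sphere :: "'a set set \<Rightarrow> ('a \<Rightarrow> 'a) \<Rightarrow> nat \<Rightarrow> bool" where
  "Z2_map_to_sphere K \<nu> d \<longleftrightarrow> (\<exists>f :: ('a \<Rightarrow> real) \<Rightarrow> (nat \<Rightarrow> real).
      continuous_on (geom K) f \<and> f ` geom K \<subseteq> sphere_d d \<and>
      (\<forall>x\<in>geom K. f (x \<circ> \<nu>) = - f x))"

definition Z2_index :: "'a set set \<Rightarrow> ('a \<Rightarrow> 'a) \<Rightarrow> int" where
  "Z2_index K \<nu> = (if K = {} then -1 else int (LEAST d. Z2_map_to_sphere K \<nu> d))"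

definition fan_labeling :: "'a set set \<Rightarrow> ('a \<Rightarrow> 'a) \<Rightarrow> ('a \<Rightarrow> int) \<Rightarrow> bool" where
  "fan_labeling K \<nu> lab \<longleftrightarrow>
     (\<forall>v\<in>vertices K. lab v \<noteq> 0) \<and>
     (\<forall>u u'. adjacent K u u' \<longrightarrow> lab u + lab u' \<noteq> 0) \<and>
     (\<forall>v\<in>vertices K. lab v + lab (\<nu> v) = 0)"

definition compatible_labelings :: "'a set set \<Rightarrow> nat set \<Rightarrow> (nat \<Rightarrow> 'a \<Rightarrow> int) \<Rightarrow> bool" where
  "compatible_labelings K I lab \<longleftrightarrow>
     (\<forall>i\<in>I. \<forall>i'\<in>I. \<forall>u u'. adjacent K u u' \<longrightarrow> lab i u + lab i' u' \<noteq> 0)"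

end

theory Submission
  imports Defs
begin


lemma hall_aux:
  "\<forall>J S. finite J \<longrightarrow> card J = m \<longrightarrow> (\<forall>j\<in>J. finite (S j)) \<longrightarrow>
     (\<forall>T\<subseteq>J. card T \<le> card (\<Union>(S ` T))) \<longrightarrow>
     (\<exists>f. inj_on f J \<and> (\<forall>j\<in>J. f j \<in> S j))"
proof (induction m rule: less_induct)
  case (less m)
  show ?case
  proof (intro allI impI)
    fix J and S :: "'a \<Rightarrow> 'b set"
    assume fJ: "finite J" and cJ: "card J = m" and fS: "\<forall>j\<in>J. finite (S j)"
      and H: "\<forall>T\<subseteq>J. card T \<le> card (\<Union>(S ` T))"
    show "\<exists>f. inj_on f J \<and> (\<forall>j\<in>J. f j \<in> S j)"
    proof (cases "J = {}")
      case True thus ?thesis by auto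
    next
      case Jne: False
      show ?thesis
      proof (cases "\<forall>T. T \<subseteq> J \<and> T \<noteq> {} \<and> T \<noteq> J \<longrightarrow> card T < card (\<Union>(S ` T))")
        case True
        obtain j0 where j0: "j0 \<in> J" using Jne by auto
        have "card {j0} \<le> card (\<Union>(S ` {j0}))" using H[rule_format, of "{j0}"] j0 by auto
        hence "S j0 \<noteq> {}" by auto
        then obtain a where a: "a \<in> S j0" by auto
        define S' where "S' = (\<lambda>j. S j - {a})"
        define J' where "J' = J - {j0}"
        have "card J > 0" using fJ j0 card_gt_0_iff by blast
        hence cJ': "card J' < m" using cJ fJ j0 unfolding J'_def
          by (simp add: card_Diff_singleton)
        have "\<exists>f. inj_on f J' \<and> (\<forall>j\<in>J'. f j \<in> S' j)"
        proof -
          have "\<forall>T\<subseteq>J'. card T \<le> card (\<Union>(S' ` T))"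
          proof (intro allI impI)
            fix T assume T: "T \<subseteq> J'"
            show "card T \<le> card (\<Union>(S' ` T))"
            proof (cases "T = {}")
              case True thus ?thesis by simp
            next
              case False
              have TJ: "T \<subseteq> J" "T \<noteq> J" using T j0 unfolding J'_def by auto
              hence lt: "card T < card (\<Union>(S ` T))" using True False by blast
              have fT: "finite T" using TJ fJ finite_subset by blast
              have fU: "finite (\<Union>(S ` T))" using fT fS TJ by auto
              have "\<Union>(S' ` T) = \<Union>(S ` T) - {a}" unfolding S'_def by auto
              hence "card (\<Union>(S' ` T)) \<ge> card (\<Union>(S ` T)) - 1"
                using fU by (simp add: card_Diff_singleton_if)
              thus ?thesis using lt by linarith
            qed
          qed
          moreover have "finite J'" using fJ unfolding J'_def by auto
          moreover have "\<forall>j\<in>J'. finite (S' j)" using fS unfolding S'_def J'_def by auto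
          ultimately show ?thesis by (intro less.IH[OF cJ', rule_format]) auto
        qed
        then obtain f where f: "inj_on f J'" "\<forall>j\<in>J'. f j \<in> S' j" by blast
        define g where "g = f(j0 := a)"
        have "inj_on g J"
        proof -
          have "J = insert j0 J'" using j0 unfolding J'_def by auto
          moreover have "inj_on g J'" using f(1) unfolding g_def J'_def
            by (simp add: inj_on_def)
          moreover have "g j0 \<notin> g ` J'" using f(2) unfolding g_def S'_def J'_def by auto
          moreover have "j0 \<notin> J'" unfolding J'_def by auto
          ultimately show ?thesis by (simp add: inj_on_insert)
        qed
        moreover have "\<forall>j\<in>J. g j \<in> S j" using f(2) a unfolding g_def S'_def J'_def by auto
        ultimately show ?thesis by blast
      next
        case False
        then obtain T where T: "T \<subseteq> J" "T \<noteq> {}" "T \<noteq> J" "\<not> card T < card (\<Union>(S ` T))"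
          by blast
        define U where "U = \<Union>(S ` T)"
        have fT: "finite T" using T fJ finite_subset by blast
        have cT: "card T < m" using T fJ cJ by (metis psubsetI psubset_card_mono)
        have "\<exists>f. inj_on f T \<and> (\<forall>j\<in>T. f j \<in> S j)"
        proof -
          have "\<forall>R\<subseteq>T. card R \<le> card (\<Union>(S ` R))" using H T(1) by (meson order_trans)
          moreover have "\<forall>j\<in>T. finite (S j)" using fS T(1) by auto
          ultimately show ?thesis using fT by (intro less.IH[OF cT, rule_format]) auto
        qed
        then obtain g where g: "inj_on g T" "\<forall>j\<in>T. g j \<in> S j" by blast
        define S'' where "S'' = (\<lambda>j. S j - U)"
        have fU: "finite U" unfolding U_def using fT fS T(1) by auto
        have cUT: "card U = card T" using H[rule_format, OF T(1)] T(4) unfolding U_def by simp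
        have "card T > 0" using fT T(2) card_gt_0_iff by blast
        moreover have "card T \<le> card J" using card_mono[OF fJ T(1)] .
        ultimately have cJT: "card (J - T) < m" using T fJ cJ fT
          by (simp add: card_Diff_subset)
        have "\<exists>f. inj_on f (J - T) \<and> (\<forall>j\<in>J - T. f j \<in> S'' j)"
        proof -
          have "\<forall>R\<subseteq>J - T. card R \<le> card (\<Union>(S'' ` R))"
          proof (intro allI impI)
            fix R assume R: "R \<subseteq> J - T"
            have fR: "finite R" using R fJ finite_subset by blast
            have RT: "R \<union> T \<subseteq> J" using R T by auto
            have c1: "card (R \<union> T) = card R + card T" using R fR fT by (subst card_Un_disjoint) auto
            have c2: "card (R \<union> T) \<le> card (\<Union>(S ` (R \<union> T)))" using H[rule_format, OF RT] .
            have sub: "\<Union>(S ` (R \<union> T)) \<subseteq> \<Union>(S'' ` R) \<union> U" unfolding S''_def U_def by auto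
            have fin: "finite (\<Union>(S'' ` R) \<union> U)" using fR fS R fU unfolding S''_def by auto
            have c3: "card (\<Union>(S ` (R \<union> T))) \<le> card (\<Union>(S'' ` R) \<union> U)"
              by (rule card_mono[OF fin sub])
            have c4: "card (\<Union>(S'' ` R) \<union> U) \<le> card (\<Union>(S'' ` R)) + card U" by (rule card_Un_le)
            show "card R \<le> card (\<Union>(S'' ` R))" using c1 c2 c3 c4 cUT by linarith
          qed
          moreover have "finite (J - T)" using fJ by auto
          moreover have "\<forall>j\<in>J - T. finite (S'' j)" using fS unfolding S''_def by auto
          ultimately show ?thesis by (intro less.IH[OF cJT, rule_format]) auto
        qed
        then obtain h where h: "inj_on h (J - T)" "\<forall>j\<in>J - T. h j \<in> S'' j" by blast
        define f where "f = (\<lambda>j. if j \<in> T then g j else h j)"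
        have "inj_on f J"
          unfolding inj_on_def
        proof (intro ballI impI)
          fix x y assume x: "x \<in> J" and y: "y \<in> J" and e: "f x = f y"
          have gU: "\<And>j. j \<in> T \<Longrightarrow> g j \<in> U" using g(2) unfolding U_def by auto
          have hU: "\<And>j. j \<in> J - T \<Longrightarrow> h j \<notin> U" using h(2) unfolding S''_def by auto
          show "x = y"
          proof (cases "x \<in> T"; cases "y \<in> T")
            assume "x \<in> T" "y \<in> T" thus ?thesis using e g(1) unfolding f_def inj_on_def by auto
          next
            assume "x \<in> T" "y \<notin> T" thus ?thesis using e gU[of x] hU[of y] y unfolding f_def by auto
          next
            assume "x \<notin> T" "y \<in> T" thus ?thesis using e gU[of y] hU[of x] x unfolding f_def by auto
          next
            assume "x \<notin> T" "y \<notin> T" thus ?thesis using e h(1) x y unfolding f_def inj_on_def by auto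
          qed
        qed
        moreover have "\<forall>j\<in>J. f j \<in> S j" using g(2) h(2) unfolding f_def S''_def by auto
        ultimately show ?thesis by blast
      qed
    qed
  qed
qed

lemma hall:
  assumes "finite J" "\<forall>j\<in>J. finite (S j)" "\<forall>T\<subseteq>J. card T \<le> card (\<Union>(S ` T))"
  shows "\<exists>f. inj_on f J \<and> (\<forall>j\<in>J. f j \<in> S j)"
  using hall_aux assms by blast

lemma ds_perm:
  fixes A :: "nat \<Rightarrow> nat \<Rightarrow> real"
  assumes nonneg: "\<And>i j. i\<in>{1..n} \<Longrightarrow> j\<in>{1..n} \<Longrightarrow> A i j \<ge> 0"
    and row: "\<And>i. i\<in>{1..n} \<Longrightarrow> (\<Sum>j=1..n. A i j) = 1"
    and col: "\<And>j. j\<in>{1..n} \<Longrightarrow> (\<Sum>i=1..n. A i j) = 1"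
  shows "\<exists>\<pi>. \<pi> permutes {1..n} \<and> (\<forall>j\<in>{1..n}. A (\<pi> j) j > 0)"
proof -
  define S where "S j = {i\<in>{1..n}. A i j > 0}" for j
  have "\<forall>T\<subseteq>{1..n}. card T \<le> card (\<Union>(S`T))"
  proof (intro allI impI)
    fix T assume T: "T \<subseteq> {1..n}"
    define N where "N = \<Union>(S`T)"
    have N: "N \<subseteq> {1..n}" unfolding N_def S_def by auto
    have fT: "finite T" using T finite_subset by blast
    have fN: "finite N" using N finite_subset by blast
    have "real (card T) = (\<Sum>j\<in>T. (\<Sum>i=1..n. A i j))"
      using col T by (simp add: subset_iff)
    also have "\<dots> = (\<Sum>j\<in>T. \<Sum>i\<in>N. A i j)"
    proof (rule sum.cong[OF refl])
      fix j assume j: "j \<in> T"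
      have z: "\<forall>i\<in>{1..n} - N. A i j = 0"
        proof
          fix i assume i: "i \<in> {1..n} - N"
          hence "\<not> A i j > 0" using j unfolding N_def S_def by auto
          moreover have "A i j \<ge> 0" using nonneg i j T by auto
          ultimately show "A i j = 0" by simp
        qed
      show "(\<Sum>i=1..n. A i j) = (\<Sum>i\<in>N. A i j)"
        using sum.mono_neutral_right[OF _ N z] by simp
    qed
    also have "\<dots> = (\<Sum>i\<in>N. \<Sum>j\<in>T. A i j)" by (rule sum.swap)
    also have "\<dots> \<le> (\<Sum>i\<in>N. \<Sum>j=1..n. A i j)"
    proof (rule sum_mono)
      fix i assume i: "i \<in> N"
      show "(\<Sum>j\<in>T. A i j) \<le> (\<Sum>j=1..n. A i j)"
        by (rule sum_mono2) (use T N i nonneg in auto)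
    qed
    also have "\<dots> = real (card N)" using row N by (simp add: subset_iff)
    finally show "card T \<le> card (\<Union>(S`T))" unfolding N_def by simp
  qed
  then obtain f where f: "inj_on f {1..n}" "\<forall>j\<in>{1..n}. f j \<in> S j"
    using hall[of "{1..n}" S] by (auto simp: S_def)
  define \<pi> where "\<pi> j = (if j\<in>{1..n} then f j else j)" for j
  have sub: "f ` {1..n} \<subseteq> {1..n}" using f(2) unfolding S_def by auto
  have img: "f ` {1..n} = {1..n}" by (rule endo_inj_surj[OF _ sub f(1)]) simp
  have "bij_betw \<pi> {1..n} {1..n}"
  proof (rule bij_betw_imageI)
    have eq: "\<And>j. j \<in> {1..n} \<Longrightarrow> \<pi> j = f j" unfolding \<pi>_def by simp
    show "inj_on \<pi> {1..n}" using f(1) inj_on_cong[of "{1..n}" \<pi> f] eq by blast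
    have "\<pi> ` {1..n} = f ` {1..n}" using eq by (rule image_cong[OF refl])
    thus "\<pi> ` {1..n} = {1..n}" using img by simp
  qed
  hence "\<pi> permutes {1..n}" by (rule bij_imp_permutes) (auto simp: \<pi>_def)
  moreover have "\<forall>j\<in>{1..n}. A (\<pi> j) j > 0" using f(2) unfolding \<pi>_def S_def by auto
  ultimately show ?thesis by blast
qed



definition gl :: "('a \<Rightarrow> int) \<Rightarrow> nat \<Rightarrow> 'a \<Rightarrow> real" where
  "gl l j u = (if l u = int j then 1 else if l u = - int j then -1 else 0)"
definition GG :: "nat \<Rightarrow> (nat \<Rightarrow> 'a \<Rightarrow> int) \<Rightarrow> nat \<Rightarrow> 'a \<Rightarrow> real" where
  "GG n lab j u = (\<Sum>i=1..n. gl (lab i) j u)"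
definition hh :: "'a set \<Rightarrow> nat \<Rightarrow> (nat \<Rightarrow> 'a \<Rightarrow> int) \<Rightarrow> ('a \<Rightarrow> real) \<Rightarrow> nat \<Rightarrow> real" where
  "hh V n lab x j = (\<Sum>u\<in>V. x u * GG n lab j u)"
definition bb :: "'a set \<Rightarrow> nat \<Rightarrow> (nat \<Rightarrow> 'a \<Rightarrow> int) \<Rightarrow> (nat \<Rightarrow> int) \<Rightarrow> ('a \<Rightarrow> real) \<Rightarrow> real" where
  "bb V n lab \<alpha> x = (\<Sum>j=1..n. of_int (\<alpha> j) * hh V n lab x j) / real n"
definition zz :: "'a set \<Rightarrow> nat \<Rightarrow> (nat \<Rightarrow> 'a \<Rightarrow> int) \<Rightarrow> (nat \<Rightarrow> int) \<Rightarrow> ('a \<Rightarrow> real) \<Rightarrow> nat \<Rightarrow> real" where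
  "zz V n lab \<alpha> x j = hh V n lab x j - bb V n lab \<alpha> x * of_int (\<alpha> j)"
definition nrm :: "'a set \<Rightarrow> nat \<Rightarrow> (nat \<Rightarrow> 'a \<Rightarrow> int) \<Rightarrow> (nat \<Rightarrow> int) \<Rightarrow> ('a \<Rightarrow> real) \<Rightarrow> real" where
  "nrm V n lab \<alpha> x = sqrt (\<Sum>k\<le>n-2. (zz V n lab \<alpha> x (k+1))\<^sup>2)"
definition FF :: "'a set \<Rightarrow> nat \<Rightarrow> (nat \<Rightarrow> 'a \<Rightarrow> int) \<Rightarrow> (nat \<Rightarrow> int) \<Rightarrow> ('a \<Rightarrow> real) \<Rightarrow> nat \<Rightarrow> real" where
  "FF V n lab \<alpha> x = (\<lambda>k. if k \<le> n-2 then zz V n lab \<alpha> x (k+1) / nrm V n lab \<alpha> x else 0)"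

lemma gl_abs: "l u \<noteq> 0 \<Longrightarrow> \<bar>gl l j u\<bar> = (if j = nat \<bar>l u\<bar> then 1 else 0)"
  unfolding gl_def by auto

lemma gl_val: "gl l j u \<noteq> 0 \<Longrightarrow> real_of_int (l u) = gl l j u * real j"
  unfolding gl_def by (auto split: if_splits)

lemma gl_cases: "gl l j u = 1 \<or> gl l j u = -1 \<or> gl l j u = 0"
  unfolding gl_def by auto

lemma gl_neg: "l v = - l u \<Longrightarrow> l u \<noteq> 0 \<Longrightarrow> gl l j v = - gl l j u"
  unfolding gl_def by auto

lemma gl_pos: "gl l j u > 0 \<Longrightarrow> l u = int j"
  unfolding gl_def by (auto split: if_splits)

lemma gl_negv: "gl l j u < 0 \<Longrightarrow> l u = - int j"
  unfolding gl_def by (auto split: if_splits)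

lemma sum_abs_gl:
  assumes "1 \<le> \<bar>l u\<bar>" "\<bar>l u\<bar> \<le> int n"
  shows "(\<Sum>j=1..n. \<bar>gl l j u\<bar>) = 1"
proof -
  have "(\<Sum>j=1..n. \<bar>gl l j u\<bar>) = (\<Sum>j=1..n. if j = nat \<bar>l u\<bar> then 1 else 0)"
    using assms by (intro sum.cong) (auto simp: gl_abs)
  also have "\<dots> = 1" using assms by (simp add: sum.delta') linarith
  finally show ?thesis .
qed

lemma cont_coord [continuous_intros]: "continuous_on S (\<lambda>x::'a \<Rightarrow> real. x u)"
  by (rule continuous_on_subset[OF continuous_on_product_coordinates]) simp

context
  fixes K :: "'a set set" and \<nu> :: "'a \<Rightarrow> 'a" and n :: nat
    and lab :: "nat \<Rightarrow> 'a \<Rightarrow> int" and \<alpha> :: "nat \<Rightarrow> int"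
  assumes n1: "n \<ge> 1"
    and fz: "free_Z2_complex K \<nu>"
    and fan: "\<forall>i\<in>{1..n}. fan_labeling K \<nu> (lab i)"
    and comp: "compatible_labelings K {1..n} lab"
    and bnd: "\<forall>i\<in>{1..n}. \<forall>v\<in>vertices K. 1 \<le> \<bar>lab i v\<bar> \<and> \<bar>lab i v\<bar> \<le> int n"
    and same: "\<forall>i\<in>{1..n}. \<forall>i'\<in>{1..n}. \<forall>u\<in>vertices K. lab i u + lab i' u \<noteq> 0"
    and alpha: "\<forall>j\<in>{1..n}. \<alpha> j \<in> {-1, 1}"
begin

lemma sc: "simplicial_complex K" using fz unfolding free_Z2_complex_def by simp

lemma finV: "finite (vertices K)"
  using sc unfolding simplicial_complex_def vertices_def by auto

lemma simp_sub: "\<sigma> \<in> K \<Longrightarrow> \<sigma> \<subseteq> vertices K"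
  unfolding vertices_def by auto

lemma nuV: "v \<in> vertices K \<Longrightarrow> \<nu> v \<in> vertices K \<and> \<nu> (\<nu> v) = v"
  using fz unfolding free_Z2_complex_def by auto

lemma bij_nu: "bij_betw \<nu> (vertices K) (vertices K)"
proof (rule bij_betw_imageI)
  show "inj_on \<nu> (vertices K)" unfolding inj_on_def by (metis nuV)
  show "\<nu> ` vertices K = vertices K"
  proof
    show "\<nu> ` vertices K \<subseteq> vertices K" using nuV by auto
    show "vertices K \<subseteq> \<nu> ` vertices K"
    proof
      fix v assume "v \<in> vertices K"
      thus "v \<in> \<nu> ` vertices K" using nuV[of v] by (metis image_eqI)
    qed
  qed
qed

lemma lab_nu: assumes i: "i \<in> {1..n}" and v: "v \<in> vertices K" shows "lab i (\<nu> v) = - lab i v"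
proof -
  have "fan_labeling K \<nu> (lab i)" using fan i by blast
  hence "lab i v + lab i (\<nu> v) = 0" using v unfolding fan_labeling_def by blast
  thus ?thesis by linarith
qed

lemma lab_nz: assumes i: "i \<in> {1..n}" and v: "v \<in> vertices K" shows "lab i v \<noteq> 0"
proof -
  have "1 \<le> \<bar>lab i v\<bar>" using bnd i v by blast
  thus ?thesis by auto
qed

lemma GG_nu: assumes v: "v \<in> vertices K" shows "GG n lab j (\<nu> v) = - GG n lab j v"
  unfolding GG_def sum_negf[symmetric]
proof (rule sum.cong[OF refl])
  fix i assume i: "i \<in> {1..n}"
  show "gl (lab i) j (\<nu> v) = - gl (lab i) j v"
    by (rule gl_neg[of "lab i" "\<nu> v" v, OF lab_nu[OF i v] lab_nz[OF i v]])
qed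

lemma hh_nu: "hh (vertices K) n lab (x \<circ> \<nu>) j = - hh (vertices K) n lab x j"
proof -
  have "hh (vertices K) n lab (x \<circ> \<nu>) j = (\<Sum>u\<in>vertices K. x (\<nu> u) * GG n lab j u)"
    unfolding hh_def by simp
  also have "\<dots> = (\<Sum>u\<in>vertices K. - (x (\<nu> u) * GG n lab j (\<nu> u)))"
    by (rule sum.cong) (auto simp: GG_nu nuV)
  also have "\<dots> = - (\<Sum>u\<in>vertices K. x (\<nu> u) * GG n lab j (\<nu> u))"
    by (simp add: sum_negf)
  also have "(\<Sum>u\<in>vertices K. x (\<nu> u) * GG n lab j (\<nu> u)) = (\<Sum>u\<in>vertices K. x u * GG n lab j u)"
    using sum.reindex_bij_betw[OF bij_nu, of "\<lambda>u. x u * GG n lab j u"] by simp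
  finally show ?thesis unfolding hh_def .
qed

lemma bb_nu: "bb (vertices K) n lab \<alpha> (x \<circ> \<nu>) = - bb (vertices K) n lab \<alpha> x"
  unfolding bb_def hh_nu mult_minus_right sum_negf by simp

lemma zz_nu: "zz (vertices K) n lab \<alpha> (x \<circ> \<nu>) j = - zz (vertices K) n lab \<alpha> x j"
  unfolding zz_def hh_nu bb_nu by simp

lemma nrm_nu: "nrm (vertices K) n lab \<alpha> (x \<circ> \<nu>) = nrm (vertices K) n lab \<alpha> x"
  unfolding nrm_def zz_nu power2_minus by (rule refl)

lemma FF_nu: "FF (vertices K) n lab \<alpha> (x \<circ> \<nu>) = - FF (vertices K) n lab \<alpha> x"
  unfolding FF_def zz_nu nrm_nu fun_eq_iff by simp

lemma cont_hh: "continuous_on S (\<lambda>x. hh V n lab x j)"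
  unfolding hh_def by (intro continuous_intros)

lemma cont_zz: "continuous_on S (\<lambda>x. zz V n lab \<alpha> x j)"
  unfolding zz_def bb_def divide_inverse by (intro continuous_intros cont_hh)

lemma cont_nrm: "continuous_on S (\<lambda>x. nrm V n lab \<alpha> x)"
  unfolding nrm_def by (intro continuous_intros cont_zz)

lemma cont_FF:
  assumes "\<forall>x\<in>S. nrm V n lab \<alpha> x \<noteq> 0"
  shows "continuous_on S (FF V n lab \<alpha>)"
proof (rule continuous_on_coordinatewise_then_product)
  fix k
  show "continuous_on S (\<lambda>x. FF V n lab \<alpha> x k)"
  proof (cases "k \<le> n - 2")
    case True
    have "continuous_on S (\<lambda>x. zz V n lab \<alpha> x (k+1) / nrm V n lab \<alpha> x)"
      by (rule continuous_on_divide[OF cont_zz cont_nrm]) (use assms in blast)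
    thus ?thesis unfolding FF_def using True by simp
  next
    case False
    thus ?thesis unfolding FF_def by simp
  qed
qed

lemma FF_sphere:
  assumes "nrm V n lab \<alpha> x \<noteq> 0"
  shows "FF V n lab \<alpha> x \<in> sphere_d (n - 2)"
proof -
  define Q where "Q = (\<Sum>k\<le>n-2. (zz V n lab \<alpha> x (k+1))\<^sup>2)"
  have Q0: "Q \<ge> 0" unfolding Q_def by (intro sum_nonneg) simp
  have nr: "nrm V n lab \<alpha> x = sqrt Q" unfolding nrm_def Q_def ..
  have "Q \<noteq> 0" using assms nr by simp
  have "(\<Sum>k\<le>n-2. (FF V n lab \<alpha> x k)\<^sup>2) = (\<Sum>k\<le>n-2. (zz V n lab \<alpha> x (k+1))\<^sup>2 / Q)"
    unfolding FF_def nr by (intro sum.cong) (auto simp: power_divide Q0)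
  also have "\<dots> = Q / Q" by (simp only: sum_divide_distrib[symmetric] Q_def[symmetric])
  also have "\<dots> = 1" using \<open>Q \<noteq> 0\<close> by simp
  finally have se: "(\<Sum>k\<le>n-2. (FF V n lab \<alpha> x k)\<^sup>2) = 1" .
  have "\<forall>i>n-2. FF V n lab \<alpha> x i = 0" by (simp add: FF_def)
  thus ?thesis unfolding sphere_d_def using se by blast
qed

lemma alpha_pm: "j \<in> {1..n} \<Longrightarrow> \<alpha> j = -1 \<or> \<alpha> j = 1"
  using alpha by auto

lemma alpha_sq: "j \<in> {1..n} \<Longrightarrow> real_of_int (\<alpha> j) * real_of_int (\<alpha> j) = 1"
  using alpha_pm by fastforce

lemma alpha_abs: "j \<in> {1..n} \<Longrightarrow> \<bar>real_of_int (\<alpha> j)\<bar> = 1"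
  using alpha_pm by fastforce

lemma core:
  assumes n2: "n \<ge> 2"
    and nowit: "\<not> (\<exists>\<sigma>\<in>K. \<exists>\<pi>. \<pi> permutes {1..n} \<and> (\<forall>j\<in>{1..n}. \<exists>u\<in>\<sigma>. lab (\<pi> j) u = \<alpha> j * int j))"
    and x: "x \<in> geom K"
  shows "nrm (vertices K) n lab \<alpha> x \<noteq> 0"
proof
  let ?V = "vertices K"
  let ?h = "\<lambda>j. hh ?V n lab x j"
  let ?z = "\<lambda>j. zz ?V n lab \<alpha> x j"
  define b where "b = bb ?V n lab \<alpha> x"
  assume nz: "nrm ?V n lab \<alpha> x = 0"
  have "(\<Sum>k\<le>n-2. (?z (k+1))\<^sup>2) = 0" using nz unfolding nrm_def
    by (metis real_sqrt_eq_zero_cancel_iff)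
  hence z0: "\<forall>k\<in>{..n-2}. (?z (k+1))\<^sup>2 = 0"
    by (subst (asm) sum_nonneg_eq_0_iff) auto
  have z1: "?z j = 0" if j: "j \<in> {1..n-1}" for j
  proof -
    have "j - 1 \<in> {..n-2}" using j by auto
    hence "(?z (j - 1 + 1))\<^sup>2 = 0" using z0 by blast
    moreover have "j - 1 + 1 = j" using j by auto
    ultimately show ?thesis by simp
  qed
  have sa: "(\<Sum>j=1..n. of_int (\<alpha> j) * ?z j) = 0"
  proof -
    have "(\<Sum>j=1..n. of_int (\<alpha> j) * ?z j)
        = (\<Sum>j=1..n. of_int (\<alpha> j) * ?h j) - b * (\<Sum>j=1..n. of_int (\<alpha> j) * of_int (\<alpha> j))"
      unfolding zz_def b_def by (simp add: algebra_simps sum_subtractf sum_distrib_left)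
    also have "(\<Sum>j=1..n. real_of_int (\<alpha> j) * real_of_int (\<alpha> j)) = real n"
      using alpha_sq by simp
    also have "(\<Sum>j=1..n. of_int (\<alpha> j) * ?h j) = b * real n"
      unfolding b_def bb_def using n2 by simp
    finally show ?thesis by simp
  qed
  have "(\<Sum>j=1..n. of_int (\<alpha> j) * ?z j) = of_int (\<alpha> n) * ?z n + (\<Sum>j\<in>{1..n}-{n}. of_int (\<alpha> j) * ?z j)"
    by (rule sum.remove) (use n2 in auto)
  also have "(\<Sum>j\<in>{1..n}-{n}. of_int (\<alpha> j) * ?z j) = 0"
    by (rule sum.neutral) (use z1 in auto)
  finally have "of_int (\<alpha> n) * ?z n = 0" using sa by simp
  moreover have "real_of_int (\<alpha> n) \<noteq> 0" using alpha_abs[of n] n2 by auto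
  ultimately have zn: "?z n = 0" by simp
  have hj: "?h j = b * of_int (\<alpha> j)" if j: "j \<in> {1..n}" for j
  proof -
    have "?z j = 0" using z1[of j] zn j by (cases "j = n") auto
    thus ?thesis unfolding zz_def b_def by simp
  qed
  obtain \<sigma> where \<sigma>K: "\<sigma> \<in> K" and x0: "\<forall>v. v \<notin> \<sigma> \<longrightarrow> x v = 0" and xs: "sum x \<sigma> = 1"
    and xnn: "\<forall>v. 0 \<le> x v"
    using x unfolding geom_def by auto
  have \<sigma>V: "\<sigma> \<subseteq> ?V" using \<sigma>K by (rule simp_sub)
  have fin\<sigma>: "finite \<sigma>" using \<sigma>V finV finite_subset by blast
  have hsig: "?h j = (\<Sum>i=1..n. \<Sum>u\<in>\<sigma>. x u * gl (lab i) j u)" for j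
  proof -
    have "?h j = (\<Sum>u\<in>\<sigma>. x u * GG n lab j u)"
      unfolding hh_def by (rule sum.mono_neutral_right[OF finV \<sigma>V]) (use x0 in auto)
    also have "\<dots> = (\<Sum>u\<in>\<sigma>. \<Sum>i=1..n. x u * gl (lab i) j u)"
      unfolding GG_def by (simp add: sum_distrib_left)
    also have "\<dots> = (\<Sum>i=1..n. \<Sum>u\<in>\<sigma>. x u * gl (lab i) j u)" by (rule sum.swap)
    finally show ?thesis .
  qed
  have sign: "(\<forall>i\<in>{1..n}. \<forall>u\<in>\<sigma>. gl (lab i) j u \<ge> 0) \<or> (\<forall>i\<in>{1..n}. \<forall>u\<in>\<sigma>. gl (lab i) j u \<le> 0)"
    for j
  proof (rule ccontr)
    assume "\<not> ?thesis"
    then obtain i u i' u' where i: "i \<in> {1..n}" and u: "u \<in> \<sigma>" and neg: "gl (lab i) j u < 0"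
      and i': "i' \<in> {1..n}" and u': "u' \<in> \<sigma>" and pos: "gl (lab i') j u' > 0"
      by (meson not_le)
    have l1: "lab i u = - int j" by (rule gl_negv[OF neg])
    have l2: "lab i' u' = int j" by (rule gl_pos[OF pos])
    show False
    proof (cases "u = u'")
      case True
      have uV: "u \<in> ?V" using u \<sigma>V by auto
      have ne: "lab i u + lab i' u \<noteq> 0" using same[rule_format, OF i i' uV] .
      have "lab i' u = int j" using l2 True by (simp only:)
      thus False using l1 ne by linarith
    next
      case False
      have cl: "\<forall>\<tau>. \<tau> \<subseteq> \<sigma> \<and> \<tau> \<noteq> {} \<longrightarrow> \<tau> \<in> K"
        using sc \<sigma>K unfolding simplicial_complex_def by blast
      have "{u, u'} \<subseteq> \<sigma>" using u u' by simp
      hence "{u, u'} \<in> K" using cl by blast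
      hence "adjacent K u u'" using False unfolding adjacent_def by simp
      hence "lab i u + lab i' u' \<noteq> 0" using comp i i' unfolding compatible_labelings_def by auto
      thus False using l1 l2 by linarith
    qed
  qed
  define A where "A i j = (\<Sum>u\<in>\<sigma>. x u * \<bar>gl (lab i) j u\<bar>)" for i j
  have Ann: "A i j \<ge> 0" for i j unfolding A_def using xnn by (intro sum_nonneg) simp
  have habs: "(?h j = (\<Sum>i=1..n. A i j) \<and> (\<forall>i\<in>{1..n}. \<forall>u\<in>\<sigma>. gl (lab i) j u \<ge> 0)) \<or>
              (?h j = - (\<Sum>i=1..n. A i j) \<and> (\<forall>i\<in>{1..n}. \<forall>u\<in>\<sigma>. gl (lab i) j u \<le> 0))" for j
    using sign[of j]
  proof
    assume P: "\<forall>i\<in>{1..n}. \<forall>u\<in>\<sigma>. gl (lab i) j u \<ge> 0"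
    have "?h j = (\<Sum>i=1..n. A i j)" unfolding hsig A_def
      by (intro sum.cong refl) (use P in auto)
    thus ?thesis using P by blast
  next
    assume P: "\<forall>i\<in>{1..n}. \<forall>u\<in>\<sigma>. gl (lab i) j u \<le> 0"
    have "?h j = (\<Sum>i=1..n. - A i j)" unfolding hsig A_def sum_negf[symmetric]
      by (intro sum.cong refl) (use P in auto)
    thus ?thesis using P by (simp add: sum_negf)
  qed
  have habs2: "\<bar>?h j\<bar> = (\<Sum>i=1..n. A i j)" for j
  proof -
    have "(\<Sum>i=1..n. A i j) \<ge> 0" by (rule sum_nonneg) (rule Ann)
    thus ?thesis using habs[of j] by auto
  qed
  have row: "(\<Sum>j=1..n. A i j) = 1" if i: "i \<in> {1..n}" for i
  proof -
    have "(\<Sum>j=1..n. A i j) = (\<Sum>u\<in>\<sigma>. \<Sum>j=1..n. x u * \<bar>gl (lab i) j u\<bar>)"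
      unfolding A_def by (rule sum.swap)
    also have "\<dots> = (\<Sum>u\<in>\<sigma>. x u)"
    proof (rule sum.cong[OF refl])
      fix u assume u: "u \<in> \<sigma>"
      hence uV: "u \<in> ?V" using \<sigma>V by auto
      have bb: "1 \<le> \<bar>lab i u\<bar> \<and> \<bar>lab i u\<bar> \<le> int n" using bnd[rule_format, OF i uV] .
      hence "(\<Sum>j=1..n. \<bar>gl (lab i) j u\<bar>) = 1" using sum_abs_gl[of "lab i" u n] by blast
      thus "(\<Sum>j=1..n. x u * \<bar>gl (lab i) j u\<bar>) = x u" by (simp add: sum_distrib_left[symmetric])
    qed
    also have "\<dots> = 1" using xs by simp
    finally show ?thesis .
  qed
  have "(\<Sum>j=1..n. \<bar>?h j\<bar>) = (\<Sum>j=1..n. \<Sum>i=1..n. A i j)" using habs2 by simp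
  also have "\<dots> = (\<Sum>i=1..n. \<Sum>j=1..n. A i j)" by (rule sum.swap)
  also have "\<dots> = (\<Sum>i=1..n. 1)" by (rule sum.cong[OF refl]) (rule row)
  finally have tot: "(\<Sum>j=1..n. \<bar>?h j\<bar>) = real n" by simp
  have "(\<Sum>j=1..n. \<bar>?h j\<bar>) = (\<Sum>j=1..n. \<bar>b\<bar>)"
    by (rule sum.cong[OF refl]) (simp add: hj abs_mult alpha_abs)
  hence "real n * \<bar>b\<bar> = real n" using tot by simp
  hence babs: "\<bar>b\<bar> = 1" using n2 by simp
  have col: "(\<Sum>i=1..n. A i j) = 1" if j: "j \<in> {1..n}" for j
    using habs2[of j] hj[OF j] babs alpha_abs[OF j] by (simp add: abs_mult)
  obtain \<pi> where \<pi>: "\<pi> permutes {1..n}" and Ap: "\<forall>j\<in>{1..n}. A (\<pi> j) j > 0"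
    using ds_perm[of n A] Ann row col by blast
  have key: "\<exists>u\<in>\<sigma>. real_of_int (lab (\<pi> j) u) = b * of_int (\<alpha> j) * real j" if j: "j \<in> {1..n}" for j
  proof -
    have pj: "\<pi> j \<in> {1..n}" using permutes_in_image[OF \<pi>] j by simp
    have "A (\<pi> j) j > 0" using Ap j by blast
    then obtain u where u: "u \<in> \<sigma>" and pu: "x u * \<bar>gl (lab (\<pi> j)) j u\<bar> > 0"
      unfolding A_def by (meson not_le sum_nonpos)
    have gnz: "gl (lab (\<pi> j)) j u \<noteq> 0" using pu by auto
    have hab: "\<bar>?h j\<bar> = 1" using hj[OF j] babs alpha_abs[OF j] by (simp add: abs_mult)
    have geq: "gl (lab (\<pi> j)) j u = ?h j"
      using habs[of j]
    proof
      assume P: "?h j = (\<Sum>i=1..n. A i j) \<and> (\<forall>i\<in>{1..n}. \<forall>u\<in>\<sigma>. gl (lab i) j u \<ge> 0)"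
      have "(\<Sum>i=1..n. A i j) \<ge> 0" by (rule sum_nonneg) (rule Ann)
      hence "?h j \<ge> 0" using P by simp
      hence "?h j = 1" using hab by simp
      moreover have "gl (lab (\<pi> j)) j u \<ge> 0" using P pj u by blast
      ultimately show ?thesis using gnz gl_cases[of "lab (\<pi> j)" j u] by auto
    next
      assume P: "?h j = - (\<Sum>i=1..n. A i j) \<and> (\<forall>i\<in>{1..n}. \<forall>u\<in>\<sigma>. gl (lab i) j u \<le> 0)"
      have "(\<Sum>i=1..n. A i j) \<ge> 0" by (rule sum_nonneg) (rule Ann)
      hence "?h j \<le> 0" using P by simp
      hence "?h j = -1" using hab by simp
      moreover have "gl (lab (\<pi> j)) j u \<le> 0" using P pj u by blast
      ultimately show ?thesis using gnz gl_cases[of "lab (\<pi> j)" j u] by auto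
    qed
    have "real_of_int (lab (\<pi> j) u) = gl (lab (\<pi> j)) j u * real j" by (rule gl_val[OF gnz])
    thus ?thesis using geq hj[OF j] u by auto
  qed
  have "b = 1 \<or> b = -1" using babs by auto
  thus False
  proof
    assume b1: "b = 1"
    have "\<forall>j\<in>{1..n}. \<exists>u\<in>\<sigma>. lab (\<pi> j) u = \<alpha> j * int j"
    proof
      fix j assume j: "j \<in> {1..n}"
      obtain u where u: "u \<in> \<sigma>" and e: "real_of_int (lab (\<pi> j) u) = b * of_int (\<alpha> j) * real j"
        using key[OF j] by blast
      have "real_of_int (lab (\<pi> j) u) = real_of_int (\<alpha> j * int j)" using e b1 by simp
      hence "lab (\<pi> j) u = \<alpha> j * int j" by (rule of_int_eq_iff[THEN iffD1])
      thus "\<exists>u\<in>\<sigma>. lab (\<pi> j) u = \<alpha> j * int j" using u by blast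
    qed
    thus False using nowit \<sigma>K \<pi> by blast
  next
    assume b1: "b = -1"
    have nsK: "\<nu> ` \<sigma> \<in> K" using fz \<sigma>K unfolding free_Z2_complex_def by blast
    have "\<forall>j\<in>{1..n}. \<exists>u\<in>\<nu> ` \<sigma>. lab (\<pi> j) u = \<alpha> j * int j"
    proof
      fix j assume j: "j \<in> {1..n}"
      have pj: "\<pi> j \<in> {1..n}" using permutes_in_image[OF \<pi>] j by simp
      obtain u where u: "u \<in> \<sigma>" and e: "real_of_int (lab (\<pi> j) u) = b * of_int (\<alpha> j) * real j"
        using key[OF j] by blast
      have uV: "u \<in> ?V" using u \<sigma>V by auto
      have "real_of_int (lab (\<pi> j) (\<nu> u)) = - real_of_int (lab (\<pi> j) u)"
        using lab_nu[OF pj uV] by simp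
      also have "\<dots> = real_of_int (\<alpha> j * int j)" using e b1 by simp
      finally have "lab (\<pi> j) (\<nu> u) = \<alpha> j * int j" by (rule of_int_eq_iff[THEN iffD1])
      thus "\<exists>u\<in>\<nu> ` \<sigma>. lab (\<pi> j) u = \<alpha> j * int j" using u by blast
    qed
    thus False using nowit nsK \<pi> by blast
  qed
qed

end

theorem proposition3p9:
  fixes K :: "'a set set" and \<nu> :: "'a \<Rightarrow> 'a" and n :: nat
    and lab :: "nat \<Rightarrow> 'a \<Rightarrow> int"
  assumes "n \<ge> 1"
    and "free_Z2_complex K \<nu>"
    and "Z2_index K \<nu> = int n - 1"
    and "\<forall>i\<in>{1..n}. fan_labeling K \<nu> (lab i)"
    and "compatible_labelings K {1..n} lab"
    and "\<forall>i\<in>{1..n}. \<forall>v\<in>vertices K. 1 \<le> \<bar>lab i v\<bar> \<and> \<bar>lab i v\<bar> \<le> int n"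
    and "\<forall>i\<in>{1..n}. \<forall>i'\<in>{1..n}. \<forall>u\<in>vertices K. lab i u + lab i' u \<noteq> 0"
  shows "\<forall>\<alpha> :: nat \<Rightarrow> int. (\<forall>j\<in>{1..n}. \<alpha> j \<in> {-1, 1}) \<longrightarrow>
           (\<exists>\<sigma>\<in>K. \<exists>\<pi>. \<pi> permutes {1..n} \<and>
              (\<forall>j\<in>{1..n}. \<exists>u\<in>\<sigma>. lab (\<pi> j) u = \<alpha> j * int j))"
proof (intro allI impI)
  fix \<alpha> :: "nat \<Rightarrow> int"
  assume alpha: "\<forall>j\<in>{1..n}. \<alpha> j \<in> {-1, 1}"
  note ctx = assms(1,2,4,5,6,7) alpha
  have Kne: "K \<noteq> {}"
  proof
    assume "K = {}"
    hence "Z2_index K \<nu> = -1" unfolding Z2_index_def by simp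
    thus False using assms(1,3) by simp
  qed
  show "\<exists>\<sigma>\<in>K. \<exists>\<pi>. \<pi> permutes {1..n} \<and> (\<forall>j\<in>{1..n}. \<exists>u\<in>\<sigma>. lab (\<pi> j) u = \<alpha> j * int j)"
  proof (cases "n = 1")
    case True
    obtain \<sigma> where \<sigma>K: "\<sigma> \<in> K" using Kne by blast
    have "\<sigma> \<noteq> {}" using sc[OF ctx] \<sigma>K unfolding simplicial_complex_def by blast
    then obtain v where v: "v \<in> \<sigma>" by blast
    have vV: "v \<in> vertices K" using simp_sub[OF ctx \<sigma>K] v by blast
    have one: "(1::nat) \<in> {1..n}" using True by simp
    have bv: "1 \<le> \<bar>lab 1 v\<bar> \<and> \<bar>lab 1 v\<bar> \<le> int n" using assms(6)[rule_format, OF one vV] .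
    hence lv: "lab 1 v = 1 \<or> lab 1 v = -1" using True by auto
    have a1: "\<alpha> 1 = -1 \<or> \<alpha> 1 = 1" using alpha one by auto
    have idp: "id permutes {1..n}" by (rule permutes_id)
    have set1: "{1..n} = {1::nat}" using True by auto
    show ?thesis
    proof (cases "lab 1 v = \<alpha> 1")
      case True
      have "\<forall>j\<in>{1..n}. \<exists>u\<in>\<sigma>. lab (id j) u = \<alpha> j * int j"
        using True v unfolding set1 by auto
      thus ?thesis using \<sigma>K idp by blast
    next
      case False
      have nsK: "\<nu> ` \<sigma> \<in> K" using assms(2) \<sigma>K unfolding free_Z2_complex_def by blast
      have "lab 1 (\<nu> v) = - lab 1 v" using lab_nu[OF ctx one vV] .
      hence e: "lab 1 (\<nu> v) = \<alpha> 1" using False lv a1 by auto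
      have "\<forall>j\<in>{1..n}. \<exists>u\<in>\<nu> ` \<sigma>. lab (id j) u = \<alpha> j * int j"
        using e v unfolding set1 by auto
      thus ?thesis using nsK idp by blast
    qed
  next
    case False
    hence n2: "n \<ge> 2" using assms(1) by simp
    show ?thesis
    proof (rule ccontr)
      assume nowit: "\<not> ?thesis"
      have nz: "\<forall>x\<in>geom K. nrm (vertices K) n lab \<alpha> x \<noteq> 0"
        using core[OF ctx n2 nowit] by blast
      have "Z2_map_to_sphere K \<nu> (n - 2)"
        unfolding Z2_map_to_sphere_def
      proof (intro exI conjI)
        show "continuous_on (geom K) (FF (vertices K) n lab \<alpha>)"
          by (rule cont_FF[OF ctx nz])
        show "FF (vertices K) n lab \<alpha> ` geom K \<subseteq> sphere_d (n - 2)"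
          using FF_sphere[OF ctx] nz by blast
        show "\<forall>x\<in>geom K. FF (vertices K) n lab \<alpha> (x \<circ> \<nu>) = - FF (vertices K) n lab \<alpha> x"
          using FF_nu[OF ctx] by blast
      qed
      hence "(LEAST d. Z2_map_to_sphere K \<nu> d) \<le> n - 2" by (rule Least_le)
      hence "Z2_index K \<nu> \<le> int (n - 2)" unfolding Z2_index_def using Kne by simp
      thus False using assms(3) n2 by simp
    qed
  qed
qed

end
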